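(* Let $\mathcal{A}$ be a unital semiprime algebra over a field $F$ with $\operatorname{char}(F)\neq2$. Then $\operatorname{QJDer}(\mathcal{A})=\operatorname{Cent}(\mathcal{A})+\operatorname{Der}(\mathcal{A})$.
   Context: $\mathcal{A}$ is semiprime if $a\mathcal{A}a=\{0\}$ implies $a=0$. $x\circ y=xy+yx$. $\operatorname{QJDer}(\mathcal{A})$: linear $f:\mathcal{A}\to\mathcal{A}$ for which there is a linear $h$ with $f(x)\circ y+x\circ f(y)=h(x\circ y)$ for all $x,y$. $\operatorname{Cent}(\mathcal{A})$: linear $f$ with $f(xy)=f(x)y=xf(y)$. $\operatorname{Der}(\mathcal{A})$: linear $d$ with $d(xy)=d(x)y+xd(y)$. Sums of sets of maps are sets of pointwise sums. *)

theory Defs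
  imports Complex_Main
begin

definition is_algebra :: "('f::field \<Rightarrow> 'a::ring \<Rightarrow> 'a) \<Rightarrow> bool" where
  "is_algebra smult \<longleftrightarrow> Vector_Spaces.vector_space smult \<and>
     (\<forall>c x y. smult c (x * y) = smult c x * y \<and> smult c (x * y) = x * smult c y)"

definition semiprime :: "'a::ring itself \<Rightarrow> bool" where
  "semiprime _ \<longleftrightarrow> (\<forall>a::'a. (\<forall>x. a * x * a = 0) \<longrightarrow> a = 0)"

definition jordan_prod :: "'a::ring \<Rightarrow> 'a \<Rightarrow> 'a" (infixl "\<circ>\<^sub>J" 70) where
  "x \<circ>\<^sub>J y = x * y + y * x"

definition QJDer :: "('f::field \<Rightarrow> 'a::ring \<Rightarrow> 'a) \<Rightarrow> ('a \<Rightarrow> 'a) set" where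
  "QJDer smult = {f. Vector_Spaces.linear smult smult f \<and>
     (\<exists>h. Vector_Spaces.linear smult smult h \<and>
        (\<forall>x y. f x \<circ>\<^sub>J y + x \<circ>\<^sub>J f y = h (x \<circ>\<^sub>J y)))}"

definition Cent :: "('f::field \<Rightarrow> 'a::ring \<Rightarrow> 'a) \<Rightarrow> ('a \<Rightarrow> 'a) set" where
  "Cent smult = {f. Vector_Spaces.linear smult smult f \<and>
     (\<forall>x y. f (x * y) = f x * y \<and> f (x * y) = x * f y)}"

definition Der :: "('f::field \<Rightarrow> 'a::ring \<Rightarrow> 'a) \<Rightarrow> ('a \<Rightarrow> 'a) set" where
  "Der smult = {d. Vector_Spaces.linear smult smult d \<and>
     (\<forall>x y. d (x * y) = d x * y + x * d y)}"

definition map_set_sum :: "('a \<Rightarrow> 'b::plus) set \<Rightarrow> ('a \<Rightarrow> 'b) set \<Rightarrow> ('a \<Rightarrow> 'b) set" where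
  "map_set_sum A B = {(\<lambda>x. f x + g x) | f g. f \<in> A \<and> g \<in> B}"

end

theory Submission
  imports Defs
begin

definition br :: "'a::ring \<Rightarrow> 'a \<Rightarrow> 'a" where "br x y = x*y - y*x"

lemma bresar_lemma:
  fixes p q :: "'a::ring"
  assumes spo: "\<forall>c::'a. (\<forall>y. c*y*c = 0) \<longrightarrow> c = 0"
    and tfo: "\<forall>c::'a. c + c = 0 \<longrightarrow> c = 0"
    and h: "\<And>z. p*z*q + q*z*p = 0"
  shows "p*z*q = 0"
proof -
  have sp: "c = 0" if "\<And>y. c*y*c = 0" for c :: 'a using spo that by blast
  have tf: "c = 0" if "c + c = 0" for c :: 'a using tfo that by blast
  have k: "p*y1*q*y2*p = 0" for y1 y2
  proof -
    have "p*y1*q*y2*p + p*y1*q*y2*p = p*y1*(p*y2*q + q*y2*p) + (p*y1*q + q*y1*p)*y2*p - (p*(y1*p*y2)*q + q*(y1*p*y2)*p)"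
      by (simp add: algebra_simps)
    also have "\<dots> = 0" by (simp only: h mult_zero_right mult_zero_left add_0 diff_self)
    finally show ?thesis by (rule tf)
  qed
  have "(p*z*q)*y*(p*z*q) = 0" for y
  proof -
    have "(p*z*q)*y*(p*z*q) = (p*z*q*y*p)*z*q" by (simp add: mult.assoc)
    also have "\<dots> = 0" using k by simp
    finally show ?thesis .
  qed
  then show ?thesis by (rule sp)
qed

lemma jordan_der_is_der:
  fixes d :: "'a::ring_1 \<Rightarrow> 'a"
  assumes sp: "\<And>c::'a. (\<And>y. c*y*c = 0) \<Longrightarrow> c = 0"
    and tf: "\<And>c::'a. c + c = 0 \<Longrightarrow> c = 0"
    and add: "\<And>p q. d (p + q) = d p + d q"
    and jd: "\<And>p q. d (p*q + q*p) = d p * q + p * d q + d q * p + q * d p"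
  shows "d (x*y) = d x * y + x * d y"
proof -
  have d0: "d 0 = 0" using add[of 0 0] by simp
  have dneg: "d (- p) = - d p" for p
  proof -
    have "d p + d (-p) = 0" using add[of p "-p"] d0 by simp
    then show ?thesis by (metis minus_unique)
  qed
  have ddiff: "d (p - q) = d p - d q" for p q using add[of p "-q"] dneg[of q] by simp
  have dsq: "d (p*p) = d p * p + p * d p" for p
  proof -
    have "(d (p*p) - (d p * p + p * d p)) + (d (p*p) - (d p * p + p * d p)) = d (p*p + p*p) - (d p * p + p * d p + d p * p + p * d p)"
      using add[of "p*p" "p*p"] by (simp add: algebra_simps)
    also have "\<dots> = 0" using jd[of p p] by simp
    finally have "d (p*p) - (d p * p + p * d p) = 0" by (rule tf)
    then show ?thesis by simp
  qed
  have H1: "d (p*q*p) = d p*q*p + p*d q*p + p*q*d p" for p q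
  proof -
    have e2: "p*(p*q+q*p) + (p*q+q*p)*p = ((p*p)*q + q*(p*p)) + (p*q*p + p*q*p)"
      by (simp add: algebra_simps)
    have e1: "d (p*(p*q+q*p) + (p*q+q*p)*p) = d ((p*p)*q + q*(p*p)) + (d (p*q*p) + d (p*q*p))"
      unfolding e2 by (simp only: add[of "(p*p)*q + q*(p*p)" "p*q*p + p*q*p"] add[of "p*q*p" "p*q*p"])
    obtain T where T: "T = d (p*q*p)" by simp
    obtain dp dq where dp: "dp = d p" and dq: "dq = d q" by simp
    have j1: "d (p*(p*q+q*p) + (p*q+q*p)*p) = d p*(p*q+q*p) + p*d(p*q+q*p) + d(p*q+q*p)*p + (p*q+q*p)*d p"
      by (rule jd)
    have j2: "d (p*q+q*p) = d p*q + p*d q + d q*p + q*d p" by (rule jd)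
    have j3: "d ((p*p)*q + q*(p*p)) = d (p*p)*q + (p*p)*d q + d q*(p*p) + q*d (p*p)" by (rule jd)
    have E: "dp*(p*q+q*p) + p*(dp*q + p*dq + dq*p + q*dp) + (dp*q + p*dq + dq*p + q*dp)*p + (p*q+q*p)*dp
       = ((dp*p + p*dp)*q + (p*p)*dq + dq*(p*p) + q*(dp*p + p*dp)) + (T + T)"
      using j1[unfolded j2] e1[unfolded j3 dsq] unfolding T dp dq by simp
    have "(T - (dp*q*p + p*dq*p + p*q*dp)) + (T - (dp*q*p + p*dq*p + p*q*dp)) =
      (((dp*p + p*dp)*q + (p*p)*dq + dq*(p*p) + q*(dp*p + p*dp)) + (T + T)) -
      (dp*(p*q+q*p) + p*(dp*q + p*dq + dq*p + q*dp) + (dp*q + p*dq + dq*p + q*dp)*p + (p*q+q*p)*dp)"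
      by (simp add: algebra_simps)
    also have "\<dots> = 0" using E by simp
    finally have "T - (dp*q*p + p*dq*p + p*q*dp) = 0" by (rule tf)
    then show ?thesis unfolding T dp dq by simp
  qed
  have H2: "d (p*q*r + r*q*p) = d p*q*r + p*d q*r + p*q*d r + d r*q*p + r*d q*p + r*q*d p" for p q r
  proof -
    have e: "(p+r)*q*(p+r) = (p*q*p + r*q*r) + (p*q*r + r*q*p)" by (simp add: algebra_simps)
    have h1: "d ((p+r)*q*(p+r)) = d (p*q*p) + d (r*q*r) + d (p*q*r + r*q*p)"
      unfolding e by (simp only: add[of "p*q*p + r*q*r" "p*q*r + r*q*p"] add[of "p*q*p" "r*q*r"])
    have h2: "d ((p+r)*q*(p+r)) = (d p + d r)*q*(p+r) + (p+r)*d q*(p+r) + (p+r)*q*(d p + d r)"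
      using H1[of "p+r" q] add[of p r] by simp
    obtain T where T: "T = d (p*q*r + r*q*p)" by simp
    obtain dp dq dr where dp: "dp = d p" and dq: "dq = d q" and dr: "dr = d r" by simp
    have E: "(dp*q*p + p*dq*p + p*q*dp) + (dr*q*r + r*dq*r + r*q*dr) + T = (dp + dr)*q*(p+r) + (p+r)*dq*(p+r) + (p+r)*q*(dp + dr)"
      using h1 h2 H1[of p q] H1[of r q] unfolding T dp dq dr by simp
    have "T = (dp + dr)*q*(p+r) + (p+r)*dq*(p+r) + (p+r)*q*(dp + dr) - ((dp*q*p + p*dq*p + p*q*dp) + (dr*q*r + r*dq*r + r*q*dr))"
      using E by (simp add: algebra_simps)
    also have "\<dots> = dp*q*r + p*dq*r + p*q*dr + dr*q*p + r*dq*p + r*q*dp" by (simp add: algebra_simps)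
    finally show ?thesis unfolding T dp dq dr .
  qed
  have Hst: "(d (p*q) - d p*q - p*d q) * r * br p q + br p q * r * (d (p*q) - d p*q - p*d q) = 0" for p q r
  proof -
    obtain Dpq Dqp dp dq dr where Dpq: "Dpq = d (p*q)" and Dqp: "Dqp = d (q*p)" and dp: "dp = d p"
      and dq: "dq = d q" and dr: "dr = d r" by simp
    have w: "(p*q)*r*(q*p) + (q*p)*r*(p*q) = p*(q*r*q)*p + q*(p*r*p)*q" by (simp add: algebra_simps)
    have e1: "d ((p*q)*r*(q*p) + (q*p)*r*(p*q)) = Dpq*r*(q*p) + (p*q)*dr*(q*p) + (p*q)*r*Dqp + Dqp*r*(p*q) + (q*p)*dr*(p*q) + (q*p)*r*Dpq"
      unfolding Dpq Dqp dr by (rule H2)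
    have e2: "d ((p*q)*r*(q*p) + (q*p)*r*(p*q)) = (dp*(q*r*q)*p + p*(dq*r*q + q*dr*q + q*r*dq)*p + p*(q*r*q)*dp)
       + (dq*(p*r*p)*q + q*(dp*r*p + p*dr*p + p*r*dp)*q + q*(p*r*p)*dq)"
      unfolding w add H1 dp dq dr by simp
    have sym: "Dqp = dp*q + p*dq + dq*p + q*dp - Dpq"
      using jd[of p q] add[of "p*q" "q*p"] unfolding Dpq Dqp dp dq by (simp add: algebra_simps)
    have E: "Dpq*r*(q*p) + (p*q)*dr*(q*p) + (p*q)*r*(dp*q + p*dq + dq*p + q*dp - Dpq) + (dp*q + p*dq + dq*p + q*dp - Dpq)*r*(p*q) + (q*p)*dr*(p*q) + (q*p)*r*Dpq
       = (dp*(q*r*q)*p + p*(dq*r*q + q*dr*q + q*r*dq)*p + p*(q*r*q)*dp)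
       + (dq*(p*r*p)*q + q*(dp*r*p + p*dr*p + p*r*dp)*q + q*(p*r*p)*dq)"
      using e1 e2 unfolding sym by simp
    have "(Dpq - dp*q - p*dq) * r * br p q + br p q * r * (Dpq - dp*q - p*dq) =
      ((dp*(q*r*q)*p + p*(dq*r*q + q*dr*q + q*r*dq)*p + p*(q*r*q)*dp)
       + (dq*(p*r*p)*q + q*(dp*r*p + p*dr*p + p*r*dp)*q + q*(p*r*p)*dq)) -
      (Dpq*r*(q*p) + (p*q)*dr*(q*p) + (p*q)*r*(dp*q + p*dq + dq*p + q*dp - Dpq) + (dp*q + p*dq + dq*p + q*dp - Dpq)*r*(p*q) + (q*p)*dr*(p*q) + (q*p)*r*Dpq)"
      unfolding br_def by (simp add: algebra_simps)
    also have "\<dots> = 0" using E by simp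
    finally show ?thesis unfolding Dpq dp dq .
  qed
  define A where "A = (\<lambda>p q. d (p*q) - d p*q - p*d q)"
  have S0: "A p q * r * br p q = 0" for p q r
  proof (rule bresar_lemma)
    show "\<forall>c::'a. (\<forall>y. c*y*c = 0) \<longrightarrow> c = 0" using sp by blast
    show "\<forall>c::'a. c + c = 0 \<longrightarrow> c = 0" using tf by blast
    show "A p q * z * br p q + br p q * z * A p q = 0" for z unfolding A_def by (rule Hst)
  qed
  have Aadd1: "A (p+p') q = A p q + A p' q" for p p' q
    unfolding A_def by (simp add: distrib_right distrib_left add algebra_simps)
  have Aadd2: "A p (q+q') = A p q + A p q'" for p q q'
    unfolding A_def by (simp add: distrib_right distrib_left add algebra_simps)
  have bradd1: "br (p+p') q = br p q + br p' q" for p p' q :: 'a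
    unfolding br_def by (simp add: algebra_simps)
  have bradd2: "br p (q+q') = br p q + br p q'" for p q q' :: 'a
    unfolding br_def by (simp add: algebra_simps)
  have M1: "A p q * r * br u q + A u q * r * br p q = 0" for p q u r
  proof -
    have "0 = A (p+u) q * r * br (p+u) q" using S0 by simp
    also have "\<dots> = A p q * r * br p q + (A p q * r * br u q + A u q * r * br p q) + A u q * r * br u q"
      unfolding Aadd1 bradd1 by (simp add: algebra_simps)
    also have "\<dots> = A p q * r * br u q + A u q * r * br p q" using S0 by simp
    finally show ?thesis by simp
  qed
  have S1: "A p q * r * br u q = 0" for p q u r
  proof (rule sp)
    fix y
    have e: "A p q * r * br u q = - (A u q * r * br p q)" using M1[where p=p and q=q and u=u and r=r] by (simp add: eq_neg_iff_add_eq_0)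
    have "(A p q * r * br u q) * y * (A p q * r * br u q) = (A p q * r * br u q) * y * (- (A u q * r * br p q))"
      by (simp only: e[symmetric])
    also have "\<dots> = - (A p q * (r * br u q * y * A u q * r) * br p q)" by (simp add: mult.assoc)
    also have "\<dots> = 0" using S0 by simp
    finally show "(A p q * r * br u q) * y * (A p q * r * br u q) = 0" .
  qed
  have M2: "A p q * r * br u v + A p v * r * br u q = 0" for p q u v r
  proof -
    have "0 = A p (q+v) * r * br u (q+v)" using S1 by simp
    also have "\<dots> = A p q * r * br u q + (A p q * r * br u v + A p v * r * br u q) + A p v * r * br u v"
      unfolding Aadd2 bradd2 by (simp add: algebra_simps)
    also have "\<dots> = A p q * r * br u v + A p v * r * br u q" using S1 by simp
    finally show ?thesis by simp
  qed
  have S2: "A p q * r * br u v = 0" for p q u v r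
  proof (rule sp)
    fix y
    have e: "A p q * r * br u v = - (A p v * r * br u q)" using M2[where p=p and q=q and u=u and v=v and r=r] by (simp add: eq_neg_iff_add_eq_0)
    have "(A p q * r * br u v) * y * (A p q * r * br u v) = (A p q * r * br u v) * y * (- (A p v * r * br u q))"
      by (simp only: e[symmetric])
    also have "\<dots> = - (A p q * (r * br u v * y * A p v * r) * br u q)" by (simp add: mult.assoc)
    also have "\<dots> = 0" using S1 by simp
    finally show "(A p q * r * br u v) * y * (A p q * r * br u v) = 0" .
  qed
  have S3: "A p q * w = w * A p q" for p q w
  proof -
    have "br (A p q) w = 0"
    proof (rule sp)
      fix y
      have "br (A p q) w * y * br (A p q) w = A p q * (w * y) * br (A p q) w - w * (A p q * y * br (A p q) w)"
        unfolding br_def[of "A p q" w] by (simp add: algebra_simps)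
      also have "\<dots> = 0" using S2 by simp
      finally show "br (A p q) w * y * br (A p q) w = 0" .
    qed
    then show ?thesis unfolding br_def by simp
  qed
  have S4: "A p q * br u v = 0" for p q u v
    using S2[of p q 1 u v] by simp
  have S5: "A p q * A p q * d (br u v) = 0" for p q u v
  proof -
    obtain a0 c where a0: "a0 = A p q" and c: "c = br u v" by simp
    have c1: "a0 * c = 0" unfolding a0 c by (rule S4)
    have c2: "c * a0 = 0" using S3[of p q c] c1 unfolding a0 by simp
    have z: "d a0 * c + a0 * d c + d c * a0 + c * d a0 = 0" using jd[of a0 c] c1 c2 d0 by simp
    have cm1: "a0 * d a0 - d a0 * a0 = 0" using S3[of p q "d a0"] unfolding a0 by simp
    have cm2: "d c * a0 - a0 * d c = 0" using S3[of p q "d c"] unfolding a0 by simp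
    have "a0 * a0 * d c + a0 * a0 * d c = a0 * (d a0 * c + a0 * d c + d c * a0 + c * d a0) - (a0 * d a0 - d a0 * a0) * c - d a0 * (a0 * c) - a0 * (d c * a0 - a0 * d c) - a0 * c * d a0"
      by (simp add: algebra_simps)
    also have "\<dots> = 0" using z c1 cm1 cm2 by simp
    finally have "a0 * a0 * d c = 0" by (rule tf)
    then show ?thesis unfolding a0 c .
  qed
  have Aanti: "A q p = - A p q" for p q
  proof -
    have "A p q + A q p = d (p*q + q*p) - (d p * q + p * d q + d q * p + q * d p)"
      unfolding A_def add by (simp add: algebra_simps)
    also have "\<dots> = 0" using jd by simp
    finally show ?thesis by (simp add: eq_neg_iff_add_eq_0 add.commute)
  qed
  have S6: "A p q = 0" for p q
  proof -
    obtain a0 where a0: "a0 = A p q" by simp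
    have two: "a0 + a0 = d (br p q) - br (d p) q - br p (d q)"
    proof -
      have "a0 + a0 = A p q - A q p" unfolding a0 Aanti[of p q] by simp
      also have "\<dots> = d (br p q) - br (d p) q - br p (d q)"
        unfolding A_def br_def ddiff by (simp add: algebra_simps)
      finally show ?thesis .
    qed
    have cube: "a0 * a0 * a0 = 0"
    proof (rule tf)
      have "a0 * a0 * a0 + a0 * a0 * a0 = a0 * a0 * (a0 + a0)" by (simp add: algebra_simps)
      also have "\<dots> = a0 * a0 * d (br p q) - a0 * (a0 * br (d p) q) - a0 * (a0 * br p (d q))"
        unfolding two by (simp add: algebra_simps)
      also have "\<dots> = 0" using S5 S4 unfolding a0 by simp
      finally show "a0 * a0 * a0 + a0 * a0 * a0 = 0" .
    qed
    have comm: "a0 * y = y * a0" for y unfolding a0 by (rule S3)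
    have sq: "a0 * a0 = 0"
    proof (rule sp)
      fix y
      have h: "y * a0 = a0 * y" using comm[of y] by simp
      have "a0 * a0 * y * (a0 * a0) = a0 * a0 * ((y * a0) * a0)" by (simp add: mult.assoc)
      also have "\<dots> = a0 * a0 * (a0 * (y * a0))" by (simp add: mult.assoc h)
      also have "\<dots> = (a0 * a0 * a0) * (a0 * y)" by (simp add: mult.assoc h)
      also have "\<dots> = 0" using cube by simp
      finally show "a0 * a0 * y * (a0 * a0) = 0" .
    qed
    have "a0 = 0"
    proof (rule sp)
      fix y
      have h: "y * a0 = a0 * y" using comm[of y] by simp
      have "a0 * y * a0 = a0 * (y * a0)" by (simp add: mult.assoc)
      also have "\<dots> = a0 * a0 * y" by (simp add: mult.assoc h)
      also have "\<dots> = 0" using sq by simp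
      finally show "a0 * y * a0 = 0" .
    qed
    then show ?thesis unfolding a0 .
  qed
  show ?thesis using S6[of x y] unfolding A_def by (simp add: algebra_simps)
qed


lemma cocycle:
  fixes g :: "'a::ring \<Rightarrow> 'a"
  assumes G: "\<And>p q. g (p*q + q*p) = g p * q + q * g p + p * g q + g q * p - (br (br a p) q + br (br a q) p)"
  shows "(br (br x (br x y)) (br a x) + br (br x y) (br x (br a x)) + br y (br x (br x (br a x)))) + (br (br x (br x y)) (br a x) + br (br x y) (br x (br a x)) + br y (br x (br x (br a x)))) = 0"
proof -
  have hX: "g (((x)*(x) + (x)*(x))) = ((g x)*(x) + (x)*(g x) + (x)*(g x) + (g x)*(x) - (br (br a (x)) (x) + br (br a (x)) (x)))" using G[of x x] by simp
  have hXy: "g ((((x)*(x) + (x)*(x)))*y + y*(((x)*(x) + (x)*(x)))) = ((((g x)*(x) + (x)*(g x) + (x)*(g x) + (g x)*(x) - (br (br a (x)) (x) + br (br a (x)) (x))))*(y) + (y)*(((g x)*(x) + (x)*(g x) + (x)*(g x) + (g x)*(x) - (br (br a (x)) (x) + br (br a (x)) (x)))) + (((x)*(x) + (x)*(x)))*(g y) + (g y)*(((x)*(x) + (x)*(x))) - (br (br a (((x)*(x) + (x)*(x)))) (y) + br (br a (y)) (((x)*(x) + (x)*(x)))))" using G[of "((x)*(x) + (x)*(x))" y] hX by simp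
  have hL: "g ((((((x)*(x) + (x)*(x)))*(y) + (y)*(((x)*(x) + (x)*(x)))))*x + x*(((((x)*(x) + (x)*(x)))*(y) + (y)*(((x)*(x) + (x)*(x)))))) = ((((((g x)*(x) + (x)*(g x) + (x)*(g x) + (g x)*(x) - (br (br a (x)) (x) + br (br a (x)) (x))))*(y) + (y)*(((g x)*(x) + (x)*(g x) + (x)*(g x) + (g x)*(x) - (br (br a (x)) (x) + br (br a (x)) (x)))) + (((x)*(x) + (x)*(x)))*(g y) + (g y)*(((x)*(x) + (x)*(x))) - (br (br a (((x)*(x) + (x)*(x)))) (y) + br (br a (y)) (((x)*(x) + (x)*(x))))))*(x) + (x)*(((((g x)*(x) + (x)*(g x) + (x)*(g x) + (g x)*(x) - (br (br a (x)) (x) + br (br a (x)) (x))))*(y) + (y)*(((g x)*(x) + (x)*(g x) + (x)*(g x) + (g x)*(x) - (br (br a (x)) (x) + br (br a (x)) (x)))) + (((x)*(x) + (x)*(x)))*(g y) + (g y)*(((x)*(x) + (x)*(x))) - (br (br a (((x)*(x) + (x)*(x)))) (y) + br (br a (y)) (((x)*(x) + (x)*(x)))))) + (((((x)*(x) + (x)*(x)))*(y) + (y)*(((x)*(x) + (x)*(x)))))*(g x) + (g x)*(((((x)*(x) + (x)*(x)))*(y) + (y)*(((x)*(x) + (x)*(x))))) - (br (br a (((((x)*(x) + (x)*(x)))*(y) + (y)*(((x)*(x) + (x)*(x)))))) (x) + br (br a (x)) (((((x)*(x) + (x)*(x)))*(y) + (y)*(((x)*(x) + (x)*(x)))))))"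 using G[of "((((x)*(x) + (x)*(x)))*(y) + (y)*(((x)*(x) + (x)*(x))))" x] hXy by simp
  have hyx: "g (y*x + x*y) = ((g y)*(x) + (x)*(g y) + (y)*(g x) + (g x)*(y) - (br (br a (y)) (x) + br (br a (x)) (y)))" using G[of y x] by simp
  have hR: "g ((((x)*(x) + (x)*(x)))*(((y)*(x) + (x)*(y))) + (((y)*(x) + (x)*(y)))*(((x)*(x) + (x)*(x)))) = ((((g x)*(x) + (x)*(g x) + (x)*(g x) + (g x)*(x) - (br (br a (x)) (x) + br (br a (x)) (x))))*(((y)*(x) + (x)*(y))) + (((y)*(x) + (x)*(y)))*(((g x)*(x) + (x)*(g x) + (x)*(g x) + (g x)*(x) - (br (br a (x)) (x) + br (br a (x)) (x)))) + (((x)*(x) + (x)*(x)))*(((g y)*(x) + (x)*(g y) + (y)*(g x) + (g x)*(y) - (br (br a (y)) (x) + br (br a (x)) (y)))) + (((g y)*(x) + (x)*(g y) + (y)*(g x) + (g x)*(y) - (br (br a (y)) (x) + br (br a (x)) (y))))*(((x)*(x) + (x)*(x))) - (br (br a (((x)*(x) + (x)*(x)))) (((y)*(x) + (x)*(y))) + br (br a (((y)*(x) + (x)*(y)))) (((x)*(x) + (x)*(x)))))" using G[of "((x)*(x) + (x)*(x))" "((y)*(x) + (x)*(y))"] hX hyx by simp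
  have jor: "(((((x)*(x) + (x)*(x)))*(y) + (y)*(((x)*(x) + (x)*(x)))))*x + x*(((((x)*(x) + (x)*(x)))*(y) + (y)*(((x)*(x) + (x)*(x))))) = (((x)*(x) + (x)*(x)))*(((y)*(x) + (x)*(y))) + (((y)*(x) + (x)*(y)))*(((x)*(x) + (x)*(x)))" by (simp add: algebra_simps)
  have E: "((((((g x)*(x) + (x)*(g x) + (x)*(g x) + (g x)*(x) - (br (br a (x)) (x) + br (br a (x)) (x))))*(y) + (y)*(((g x)*(x) + (x)*(g x) + (x)*(g x) + (g x)*(x) - (br (br a (x)) (x) + br (br a (x)) (x)))) + (((x)*(x) + (x)*(x)))*(g y) + (g y)*(((x)*(x) + (x)*(x))) - (br (br a (((x)*(x) + (x)*(x)))) (y) + br (br a (y)) (((x)*(x) + (x)*(x))))))*(x) + (x)*(((((g x)*(x) + (x)*(g x) + (x)*(g x) + (g x)*(x) - (br (br a (x)) (x) + br (br a (x)) (x))))*(y) + (y)*(((g x)*(x) + (x)*(g x) + (x)*(g x) + (g x)*(x) - (br (br a (x)) (x) + br (br a (x)) (x)))) + (((x)*(x) + (x)*(x)))*(g y) + (g y)*(((x)*(x) + (x)*(x))) - (br (br a (((x)*(x) + (x)*(x)))) (y) + br (br a (y)) (((x)*(x) + (x)*(x)))))) + (((((x)*(x) + (x)*(x)))*(y) + (y)*(((x)*(x) + (x)*(x)))))*(g x) + (g x)*(((((x)*(x) + (x)*(x)))*(y) + (y)*(((x)*(x) + (x)*(x))))) - (br (br a (((((x)*(x) + (x)*(x)))*(y)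 + (y)*(((x)*(x) + (x)*(x)))))) (x) + br (br a (x)) (((((x)*(x) + (x)*(x)))*(y) + (y)*(((x)*(x) + (x)*(x))))))) = ((((g x)*(x) + (x)*(g x) + (x)*(g x) + (g x)*(x) - (br (br a (x)) (x) + br (br a (x)) (x))))*(((y)*(x) + (x)*(y))) + (((y)*(x) + (x)*(y)))*(((g x)*(x) + (x)*(g x) + (x)*(g x) + (g x)*(x) - (br (br a (x)) (x) + br (br a (x)) (x)))) + (((x)*(x) + (x)*(x)))*(((g y)*(x) + (x)*(g y) + (y)*(g x) + (g x)*(y) - (br (br a (y)) (x) + br (br a (x)) (y)))) + (((g y)*(x) + (x)*(g y) + (y)*(g x) + (g x)*(y) - (br (br a (y)) (x) + br (br a (x)) (y))))*(((x)*(x) + (x)*(x))) - (br (br a (((x)*(x) + (x)*(x)))) (((y)*(x) + (x)*(y))) + br (br a (((y)*(x) + (x)*(y)))) (((x)*(x) + (x)*(x)))))" using hL hR jor by simp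
  have "(br (br x (br x y)) (br a x) + br (br x y) (br x (br a x)) + br y (br x (br x (br a x)))) + (br (br x (br x y)) (br a x) + br (br x y) (br x (br a x)) + br y (br x (br x (br a x)))) = (((((g x)*(x) + (x)*(g x) + (x)*(g x) + (g x)*(x) - (br (br a (x)) (x) + br (br a (x)) (x))))*(((y)*(x) + (x)*(y))) + (((y)*(x) + (x)*(y)))*(((g x)*(x) + (x)*(g x) + (x)*(g x) + (g x)*(x) - (br (br a (x)) (x) + br (br a (x)) (x)))) + (((x)*(x) + (x)*(x)))*(((g y)*(x) + (x)*(g y) + (y)*(g x) + (g x)*(y) - (br (br a (y)) (x) + br (br a (x)) (y)))) + (((g y)*(x) + (x)*(g y) + (y)*(g x) + (g x)*(y) - (br (br a (y)) (x) + br (br a (x)) (y))))*(((x)*(x) + (x)*(x))) - (br (br a (((x)*(x) + (x)*(x)))) (((y)*(x) + (x)*(y))) + br (br a (((y)*(x) + (x)*(y)))) (((x)*(x) + (x)*(x)))))) - (((((((g x)*(x) + (x)*(g x) + (x)*(g x) + (g x)*(x) - (br (br a (x)) (x) + br (br a (x)) (x))))*(y) + (y)*(((g x)*(x) + (x)*(g x) + (x)*(g x) + (g x)*(x) - (br (br a (x)) (x) + br (br a (x)) (x)))) + (((x)*(x) + (x)*(x)))*(g y) + (g y)*(((x)*(x) + (x)*(x))) - (br (br a (((x)*(x) + (x)*(x)))) (y) + br (br a (y)) (((x)*(x) + (x)*(x))))))*(x) + (x)*(((((g x)*(x) + (x)*(g x) + (x)*(g x) + (g x)*(x) - (br (br a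 (x)) (x) + br (br a (x)) (x))))*(y) + (y)*(((g x)*(x) + (x)*(g x) + (x)*(g x) + (g x)*(x) - (br (br a (x)) (x) + br (br a (x)) (x)))) + (((x)*(x) + (x)*(x)))*(g y) + (g y)*(((x)*(x) + (x)*(x))) - (br (br a (((x)*(x) + (x)*(x)))) (y) + br (br a (y)) (((x)*(x) + (x)*(x)))))) + (((((x)*(x) + (x)*(x)))*(y) + (y)*(((x)*(x) + (x)*(x)))))*(g x) + (g x)*(((((x)*(x) + (x)*(x)))*(y) + (y)*(((x)*(x) + (x)*(x))))) - (br (br a (((((x)*(x) + (x)*(x)))*(y) + (y)*(((x)*(x) + (x)*(x)))))) (x) + br (br a (x)) (((((x)*(x) + (x)*(x)))*(y) + (y)*(((x)*(x) + (x)*(x))))))))" unfolding br_def by (simp add: algebra_simps)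
  also have "\<dots> = 0" using E by simp
  finally show ?thesis .
qed

lemma central_from_phi:
  fixes a :: "'a::ring"
  assumes spo: "\<forall>c::'a. (\<forall>y. c*y*c = 0) \<longrightarrow> c = 0"
    and tfo: "\<forall>c::'a. c + c = 0 \<longrightarrow> c = 0"
    and Phi: "\<And>x y. br (br x (br x y)) (br a x) + br (br x y) (br x (br a x)) + br y (br x (br x (br a x))) = 0"
  shows "x * a = a * x"
proof -
  have sp: "c = 0" if "\<And>y. c*y*c = 0" for c :: 'a using spo that by blast
  have tf: "c = 0" if "c + c = 0" for c :: 'a using tfo that by blast
  have brself: "br p p = 0" for p :: 'a by (simp add: br_def)
  have br0[simp]: "br p 0 = 0" "br 0 p = 0" for p :: 'a by (simp_all add: br_def)
  have V: "br x (br x (br a x)) = 0" for x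
  proof -
    have P: "(br (br x (br x y)) (br a x) + br (br x y) (br x (br a x)) + br y (br x (br x (br a x)))) = 0" for y using Phi[of x y] by simp
    have a0: "br x (br x (br x (br a x))) = 0" using P[of x] by (simp add: brself br0)
    have A: "br x (br x y) * br x (br a x) + br x y * br x (br x (br a x)) = 0" for y
    proof -
      have "br x (br x y) * br x (br a x) + br x y * br x (br x (br a x)) = (br (br x (br x (y*x))) (br a x) + br (br x (y*x)) (br x (br a x)) + br (y*x) (br x (br x (br a x)))) - (br (br x (br x y)) (br a x) + br (br x y) (br x (br a x)) + br y (br x (br x (br a x)))) * x - y * br x (br x (br x (br a x)))"
        unfolding br_def by (simp add: algebra_simps)
      also have "\<dots> = 0" using P[of "y*x"] P[of y] a0 by simp
      finally show ?thesis .
    qed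
    have C: "br x (br x y) * br x (br x (br a x)) = 0" for y
    proof -
      have "br x (br x y) * br x (br x (br a x)) = (br x (br x (y*x)) * br x (br a x) + br x (y*x) * br x (br x (br a x)))
         - (br x (br x y) * br x (br a x) + br x y * br x (br x (br a x))) * x - br x y * br x (br x (br x (br a x)))"
        unfolding br_def by (simp add: algebra_simps)
      also have "\<dots> = 0" using A[of "y*x"] A[of y] a0 by simp
      finally show ?thesis .
    qed
    have SS: "br x (br x y) * z * br x (br x (br a x)) + br x y * br x z * br x (br x (br a x)) + br x y * br x z * br x (br x (br a x)) = 0" for y z
    proof -
      have "br x (br x y) * z * br x (br x (br a x)) + br x y * br x z * br x (br x (br a x)) + br x y * br x z * br x (br x (br a x))
         = br x (br x (y*z)) * br x (br x (br a x)) - y * (br x (br x z) * br x (br x (br a x)))"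
        unfolding br_def by (simp add: algebra_simps)
      also have "\<dots> = 0" using C[of "y*z"] C[of z] by simp
      finally show ?thesis .
    qed
    have "br x (br x (br a x)) * z * br x (br x (br a x)) = 0" for z
    proof -
      let ?v = "br x (br x (br a x))"
      let ?SSw = "br x (br x (br a x)) * z * ?v + br x (br a x) * br x z * ?v + br x (br a x) * br x z * ?v"
      let ?SSa = "br x (br x a) * br x z * ?v + br x a * br x (br x z) * ?v + br x a * br x (br x z) * ?v"
      let ?Cz = "br x (br x z) * ?v"
      have "?v * z * ?v = ?SSw + ?SSa + ?SSa - (br x a * ?Cz + br x a * ?Cz + br x a * ?Cz + br x a * ?Cz)"
        unfolding br_def by (simp add: algebra_simps)
      also have "\<dots> = 0" using SS[of "br a x" z] SS[of a "br x z"] C[of z] by simp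
      finally show ?thesis .
    qed
    then show ?thesis by (rule sp)
  qed
  have F4: "br t (br x (br a x)) + br x (br t (br a x)) + br x (br x (br a t)) = 0" for x t
  proof (rule tf)
    have "(br t (br x (br a x)) + br x (br t (br a x)) + br x (br x (br a t))) + (br t (br x (br a x)) + br x (br t (br a x)) + br x (br x (br a t)))
      = br (x+t) (br (x+t) (br a (x+t))) - br (x-t) (br (x-t) (br a (x-t))) - (br (t) (br (t) (br a (t))) + br (t) (br (t) (br a (t))))"
      unfolding br_def by (simp add: algebra_simps)
    also have "\<dots> = 0" using V[of "x+t"] V[of "x-t"] V[of t] by simp
    finally show "(br t (br x (br a x)) + br x (br t (br a x)) + br x (br x (br a t))) + (br t (br x (br a x)) + br x (br t (br a x)) + br x (br x (br a t))) = 0" .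
  qed
  have U: "br x (br a x) = 0" for x
  proof (rule sp)
    fix z
    have P: "(br (br x (br x y)) (br a x) + br (br x y) (br x (br a x)) + br y (br x (br x (br a x)))) = 0" for y using Phi[of x y] by simp
    have v0: "br x (br x (br a x)) = 0" by (rule V)
    have F1: "br x (br x y) * br x (br a x) = 0" for y
    proof -
      have "br x (br x y) * br x (br a x) = (br (br x (br x (y*x))) (br a x) + br (br x (y*x)) (br x (br a x)) + br (y*x) (br x (br x (br a x)))) - (br (br x (br x y)) (br a x) + br (br x y) (br x (br a x)) + br y (br x (br x (br a x)))) * x - y * br x (br x (br x (br a x))) - br x y * br x (br x (br a x))"
        unfolding br_def by (simp add: algebra_simps)
      also have "\<dots> = 0" using P[of "y*x"] P[of y] v0 by simp
      finally show ?thesis .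
    qed
    have F2: "br x (br a x) * br x (br x y) = 0" for y
    proof -
      have "br x (br a x) * br x (br x y) = (br (br x (br x (x*y))) (br a x) + br (br x (x*y)) (br x (br a x)) + br (x*y) (br x (br x (br a x)))) - x * (br (br x (br x y)) (br a x) + br (br x y) (br x (br a x)) + br y (br x (br x (br a x)))) - br x (br x (br x (br a x))) * y - br x (br x (br a x)) * br x y"
        unfolding br_def by (simp add: algebra_simps)
      also have "\<dots> = 0" using P[of "x*y"] P[of y] v0 by simp
      finally show ?thesis .
    qed
    have F3: "br (br x (br x y)) (br a x) + br (br x y) (br x (br a x)) = 0" for y
      using P[of y] v0 by (simp add: br0)
    have F4x: "br t (br x (br a x)) + br x (br t (br a x)) + br x (br x (br a t)) = 0" for t by (rule F4)
    have "br x (br a x) * z * br x (br a x) + br x (br a x) * z * br x (br a x) + br x (br a x) * z * br x (br a x) + br x (br a x) * z * br x (br a x) = - ((br x (br x a) * br x (br a x)) * z) - ((br x (br x a) * br x (br a x)) * z) - (z * (br x (br x a) * br x (br a x))) - (z * (br x (br x a) * br x (br a x))) + ((br x (br x (a * z)) * br x (br a x))) - ((br x (br x (z * a)) * br x (br a x))) - ((br x (br a x) * br x (br x (a * z)))) + ((br x (br a x) * br x (br x (z * a)))) + ((br (br x (br x z)) (br a x) + br (br x z) (br x (br a x))) * x * a) - ((br (br x (br x z)) (br a x) + br (br x z) (br x (br a x))) * a * x) - (x * a * (br (br x (br x z)) (br a x) + br (br x z) (br x (br a x)))) + (a * x * (br (br x (br x z)) (br a x) + br (br x z) (br x (br a x))))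 + ((br (br x (br x (x * a * z))) (br a x) + br (br x (x * a * z)) (br x (br a x)))) + ((br (br x (br x (x * a * z))) (br a x) + br (br x (x * a * z)) (br x (br a x)))) + ((br (br x (br x (x * a * z))) (br a x) + br (br x (x * a * z)) (br x (br a x)))) - ((br (br x (br x (x * z * a))) (br a x) + br (br x (x * z * a)) (br x (br a x)))) - ((br (br x (br x (z * x * a))) (br a x) + br (br x (z * x * a)) (br x (br a x)))) - ((br (br x (br x (z * x * a))) (br a x) + br (br x (z * x * a)) (br x (br a x)))) - ((br (br x (br x (a * z * x))) (br a x) + br (br x (a * z * x)) (br x (br a x)))) - ((br (br x (br x (a * x * z))) (br a x) + br (br x (a * x * z)) (br x (br a x)))) - ((br (br x (br x (a * x * z))) (br a x) + br (br x (a * x * z)) (br x (br a x)))) + ((br (br x (br x (z * a * x))) (br a x) + br (br x (z * a * x)) (br x (br a x)))) + ((br (br x (br x (z * a * x))) (br a x) + br (br x (z * a * x)) (br x (br a x)))) + ((br (br x (br x (z * a * x))) (br a x) + br (br x (z * a * x)) (br x (br a x)))) + ((br z (br x (br a x)) + br x (br z (br a x)) + br x (br x (br a z))) * a * x * x) + ((br z (br x (br a x)) + br x (br z (br a x)) + br x (br x (br a z))) * a * x * x) + ((br z (br x (br a x)) + br x (br z (br a x)) + br x (br x (br a z))) * x * x * a) - ((br z (br x (br a x)) + br x (br z (br a x)) + br x (br x (br a z))) * x * a * x) - ((br z (br x (br a x)) + br x (br z (br a x)) + br x (br x (br a z))) * x * a * x) - ((br z (br x (br a x)) + br x (br z (br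 a x)) + br x (br x (br a z))) * x * a * x) + (x * (br z (br x (br a x)) + br x (br z (br a x)) + br x (br x (br a z))) * x * a) - (x * (br z (br x (br a x)) + br x (br z (br a x)) + br x (br x (br a z))) * a * x) + (x * a * (br z (br x (br a x)) + br x (br z (br a x)) + br x (br x (br a z))) * x) - (a * x * (br z (br x (br a x)) + br x (br z (br a x)) + br x (br x (br a z))) * x) - (a * x * x * (br z (br x (br a x)) + br x (br z (br a x)) + br x (br x (br a z)))) - (x * x * a * (br z (br x (br a x)) + br x (br z (br a x)) + br x (br x (br a z)))) - (x * x * a * (br z (br x (br a x)) + br x (br z (br a x)) + br x (br x (br a z)))) + (x * a * x * (br z (br x (br a x)) + br x (br z (br a x)) + br x (br x (br a z)))) + (x * a * x * (br z (br x (br a x)) + br x (br z (br a x)) + br x (br x (br a z)))) + (x * a * x * (br z (br x (br a x)) + br x (br z (br a x)) + br x (br x (br a z))))"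
      unfolding br_def by (simp add: algebra_simps)
    also have "\<dots> = 0" by (simp add: F1 F2 F3 F4x)
    finally have "br x (br a x) * z * br x (br a x) + br x (br a x) * z * br x (br a x) = 0"
      by (metis tf add.assoc)
    then show "br x (br a x) * z * br x (br a x) = 0" by (rule tf)
  qed
  have Q: "br p (br p a) = 0" for p
  proof -
    have "br p (br p a) = - br p (br a p)" unfolding br_def by (simp add: algebra_simps)
    then show ?thesis using U[of p] by simp
  qed
  have L: "br p (br q a) + br q (br p a) = 0" for p q
  proof -
    have "br p (br q a) + br q (br p a) = br (p+q) (br (p+q) a) - br p (br p a) - br q (br q a)"
      unfolding br_def by (simp add: algebra_simps)
    then show ?thesis using Q by simp
  qed
  have M: "br x y * br x a = 0" for y
  proof -
    have "br x y * br x a = (br x (br (y*x) a) + br (y*x) (br x a)) - (br x (br y a) + br y (br x a)) * x - (y * br x (br x a) + y * br x (br x a))"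
      unfolding br_def by (simp add: algebra_simps)
    then show ?thesis using L Q by simp
  qed
  have "br x a = 0"
  proof (rule sp)
    fix y
    have "br x a * y * br x a = br x (a*y) * br x a - a * (br x y * br x a)"
      unfolding br_def by (simp add: algebra_simps)
    then show "br x a * y * br x a = 0" using M by simp
  qed
  then show ?thesis unfolding br_def by simp
qed


theorem corollary4p6:
  fixes smult :: "'f::field \<Rightarrow> 'a::ring_1 \<Rightarrow> 'a"
  assumes "is_algebra smult"
    and "semiprime TYPE('a)"
    and "(2::'f) \<noteq> 0"
  shows "QJDer smult = map_set_sum (Cent smult) (Der smult)"
proof -
  have alg: "Vector_Spaces.vector_space smult \<and>
     (\<forall>c x y. smult c (x * y) = smult c x * y \<and> smult c (x * y) = x * smult c y)"
    using assms(1) unfolding is_algebra_def by blast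
  have vs: "Vector_Spaces.vector_space smult" using alg by blast
  have msc1: "smult c (x*y) = smult c x * y" for c x y using alg by blast
  have msc2: "smult c (x*y) = x * smult c y" for c x y using alg by blast
  have md: "module smult" using vs by (simp add: module_iff_vector_space)
  have spo: "\<forall>c::'a. (\<forall>y. c*y*c = 0) \<longrightarrow> c = 0"
    using assms(2) unfolding semiprime_def by blast
  have sp: "c = 0" if "\<And>y. c*y*c = 0" for c :: 'a using spo that by blast
  have tf: "c = 0" if "c + c = 0" for c :: 'a
  proof -
    have "smult 2 c = smult (1+1) c" by simp
    also have "\<dots> = c + c" using module.scale_left_distrib[OF md, of 1 1 c] module.scale_one[OF md] by simp
    finally have "smult 2 c = 0" using that by simp
    then have "smult (inverse 2) (smult 2 c) = 0" using module.scale_zero_right[OF md] by simp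
    then have "smult (inverse 2 * 2) c = 0" using module.scale_scale[OF md] by simp
    then show "c = 0" using assms(3) module.scale_one[OF md] by simp
  qed
  have tfo: "\<forall>c::'a. c + c = 0 \<longrightarrow> c = 0" using tf by blast
  have lin: "Vector_Spaces.linear smult smult f \<longleftrightarrow>
      (\<forall>x y. f (x + y) = f x + f y) \<and> (\<forall>c x. f (smult c x) = smult c (f x))" for f
    using vs by (simp add: Vector_Spaces.linear_iff)
  show ?thesis
  proof (rule set_eqI, rule iffI)
    fix f assume "f \<in> QJDer smult"
    then obtain h where lf: "Vector_Spaces.linear smult smult f" and lh: "Vector_Spaces.linear smult smult h"
      and Q: "\<And>x y. f x \<circ>\<^sub>J y + x \<circ>\<^sub>J f y = h (x \<circ>\<^sub>J y)"
      unfolding QJDer_def by blast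
    have fadd: "f (x + y) = f x + f y" and fsc: "f (smult c x) = smult c (f x)" for x y c
      using lf unfolding lin by auto
    have hadd: "h (x + y) = h x + h y" for x y
      using lh unfolding lin by auto
    define a where "a = f 1"
    have hx: "h x + h x = f x + f x + (x*a + a*x)" for x
    proof -
      have "f x * 1 + 1 * f x + (x * f 1 + f 1 * x) = h (x * 1 + 1 * x)"
        using Q[of x 1] unfolding jordan_prod_def by (simp add: add.assoc)
      then show ?thesis unfolding a_def by (simp add: hadd)
    qed
    define g where "g x = f x + f x - (x*a + a*x)" for x
    have gadd: "g (x + y) = g x + g y" for x y
      unfolding g_def fadd by (simp add: algebra_simps)
    have G: "g (p*q + q*p) = g p * q + q * g p + p * g q + g q * p - (br (br a p) q + br (br a q) p)" for p q
    proof -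
      have q1: "h (p*q + q*p) = f p * q + q * f p + p * f q + f q * p"
        using Q[of p q] unfolding jordan_prod_def by (simp add: algebra_simps)
      have q2: "f (p*q + q*p) + f (p*q + q*p) = (h (p*q + q*p) + h (p*q + q*p)) - ((p*q + q*p)*a + a*(p*q + q*p))"
        using hx[of "p*q + q*p"] by (simp add: algebra_simps)
      obtain fp fq where fp: "fp = f p" and fq: "fq = f q" by simp
      have "g (p*q + q*p) = ((fp * q + q * fp + p * fq + fq * p) + (fp * q + q * fp + p * fq + fq * p))
           - ((p*q + q*p)*a + a*(p*q + q*p)) - ((p*q + q*p)*a + a*(p*q + q*p))"
        unfolding g_def q2 q1 fp fq by (simp add: algebra_simps)
      also have "\<dots> = (fp + fp - (p*a + a*p)) * q + q * (fp + fp - (p*a + a*p)) + p * (fq + fq - (q*a + a*q))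
           + (fq + fq - (q*a + a*q)) * p - (br (br a p) q + br (br a q) p)"
        unfolding br_def by (simp add: algebra_simps)
      finally show ?thesis unfolding g_def fp fq .
    qed
    have Phi: "br (br x (br x y)) (br a x) + br (br x y) (br x (br a x)) + br y (br x (br x (br a x))) = 0" for x y
      by (rule tf) (rule cocycle[OF G])
    have cen: "x * a = a * x" for x
      by (rule central_from_phi[OF spo tfo Phi])
    have bra: "br a p = 0" for p unfolding br_def using cen[of p] by simp
    have br0: "br 0 p = 0" for p :: 'a unfolding br_def by simp
    have gder: "g (x*y) = g x * y + x * g y" for x y
    proof (rule jordan_der_is_der[where d = g])
      show "\<And>c::'a. (\<And>y. c*y*c = 0) \<Longrightarrow> c = 0" by (rule sp)
      show "\<And>c::'a. c + c = 0 \<Longrightarrow> c = 0" by (rule tf)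
      show "\<And>p q. g (p + q) = g p + g q" by (rule gadd)
      show "\<And>p q. g (p*q + q*p) = g p * q + p * g q + g q * p + q * g p"
        using G by (simp add: bra br0 algebra_simps)
    qed
    define c where "c x = a * x" for x
    define d where "d x = f x - a * x" for x
    have "c \<in> Cent smult"
    proof -
      have "Vector_Spaces.linear smult smult c"
        unfolding lin c_def by (simp add: distrib_left msc2)
      moreover have "c (x*y) = c x * y \<and> c (x*y) = x * c y" for x y
        unfolding c_def using cen[of x] by (simp add: mult.assoc[symmetric])
      ultimately show ?thesis unfolding Cent_def by blast
    qed
    moreover have "d \<in> Der smult"
    proof -
      have "Vector_Spaces.linear smult smult d"
        unfolding lin d_def by (simp add: fadd fsc distrib_left msc2[symmetric] module.scale_right_diff_distrib[OF md] algebra_simps)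
      moreover have "d (x*y) = d x * y + x * d y" for x y
      proof -
        have gd: "g p = d p + d p" for p unfolding g_def d_def using cen[of p] by (simp add: algebra_simps)
        have "(d (x*y) - (d x * y + x * d y)) + (d (x*y) - (d x * y + x * d y)) = g (x*y) - (g x * y + x * g y)"
          unfolding gd by (simp add: algebra_simps)
        also have "\<dots> = 0" using gder by simp
        finally show ?thesis using tf by (metis eq_iff_diff_eq_0)
      qed
      ultimately show ?thesis unfolding Der_def by blast
    qed
    moreover have "f = (\<lambda>x. c x + d x)" unfolding c_def d_def by auto
    ultimately show "f \<in> map_set_sum (Cent smult) (Der smult)" unfolding map_set_sum_def by blast
  next
    fix f assume "f \<in> map_set_sum (Cent smult) (Der smult)"
    then obtain c d where f: "f = (\<lambda>x. c x + d x)" and cC: "c \<in> Cent smult" and dD: "d \<in> Der smult"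
      unfolding map_set_sum_def by blast
    have lc: "Vector_Spaces.linear smult smult c" using cC unfolding Cent_def by blast
    have cm1: "c (x*y) = c x * y" for x y using cC unfolding Cent_def by blast
    have cm2: "c (x*y) = x * c y" for x y using cC unfolding Cent_def by blast
    have ld: "Vector_Spaces.linear smult smult d" using dD unfolding Der_def by blast
    have dm: "d (x*y) = d x * y + x * d y" for x y using dD unfolding Der_def by blast
    have cadd: "c (x + y) = c x + c y" and csc: "c (smult r x) = smult r (c x)" for x y r
      using lc unfolding lin by auto
    have dadd: "d (x + y) = d x + d y" and dsc: "d (smult r x) = smult r (d x)" for x y r
      using ld unfolding lin by auto
    have "Vector_Spaces.linear smult smult f"
      unfolding lin f by (simp add: cadd dadd csc dsc module.scale_right_distrib[OF md] algebra_simps)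
    moreover have "Vector_Spaces.linear smult smult (\<lambda>x. c x + c x + d x)"
      unfolding lin by (simp add: cadd dadd csc dsc module.scale_right_distrib[OF md] algebra_simps)
    moreover have "f x \<circ>\<^sub>J y + x \<circ>\<^sub>J f y = (\<lambda>x. c x + c x + d x) (x \<circ>\<^sub>J y)" for x y
    proof -
      have e1: "c x * y = c (x*y)" "x * c y = c (x*y)" "c y * x = c (y*x)" "y * c x = c (y*x)"
        using cm1 cm2 by auto
      have e2: "c (x*y + y*x) = c (x*y) + c (y*x)" "d (x*y + y*x) = d (x*y) + d (y*x)"
        using cadd dadd by auto
      show ?thesis unfolding f jordan_prod_def e2 dm
        by (simp add: algebra_simps e1)
    qed
    ultimately show "f \<in> QJDer smult" unfolding QJDer_def by blast
  qed
qed

end
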